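(* Let $n \ge 2$ be an integer, $\lambda > 0$ a real number and $C \ge 1$. There exists a constant $C'>0$ depending only on $n$ and $C$ such that the following hold. (i) Let $\xi$ be a real number with $C^{-1} \le |\xi| \le C$, and let $(p_0,\ldots,p_n) \in \mathbb{Z}^{n+1}$ with $q := p_0 \ge 1$ and $|q\xi^i - p_i| \le C q^{-\lambda}$ for $i = 1,\ldots,n$. Then $|p_i\xi - p_{i+1}| \le C' q^{-\lambda}$ for all $i\in\{0,\ldots,n-1\}$, and $|p_{i-1}p_{i+1} - p_i^2| \le C' q^{1-\lambda}$ for all $i \in \{1,\ldots,n-1\}$. (ii) Conversely, let $(p_0,\ldots,p_n) \in \mathbb{Z}^{n+1}$ with $q := p_0 \ge 1$, $C^{-1} q \le |p_i| \le C q$ for all $i \in \{0,\ldots,n\}$, and $|p_{i-1}p_{i+1} - p_i^2| \le C q^{1-\lambda}$ for all $i \in \{1,\ldots,n-1\}$. Then there exists a real number $\xi$ with $|q\xi^i - p_i| \le C' q^{-\lambda}$ for $i = 1,\ldots,n$.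
   Context: The paper writes these statements with Vinogradov notation ($\ll$, $\asymp$ with implied constants depending on the fixed data); here the implied constants are made explicit. *)

theory Defs
  imports Complex_Main
begin

end

theory Submission
  imports Defs
begin

lemma part2:
  fixes a :: "nat \<Rightarrow> real" and Q C t :: real and n :: nat
  assumes C: "C \<ge> 1" and Q: "Q \<ge> 1" and t: "t \<ge> 0" and n: "n \<ge> 1" and a0: "a 0 = Q"
    and bnd: "\<forall>i\<le>n. Q / C \<le> \<bar>a i\<bar> \<and> \<bar>a i\<bar> \<le> C * Q"
    and E: "\<forall>i\<in>{1..<n}. \<bar>a (i-1) * a (i+1) - a i ^ 2\<bar> \<le> C * Q * t"
  shows "\<forall>i\<in>{1..n}. \<bar>Q * (a 1 / Q) ^ i - a i\<bar> \<le> real n ^ 2 * C ^ (n+4) * t"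
proof -
  define \<xi> where "\<xi> = a 1 / Q"
  have QC: "Q / C > 0" using C Q by simp
  have nz: "\<And>i. i \<le> n \<Longrightarrow> a i \<noteq> 0" using bnd QC by force
  have xi: "\<bar>\<xi>\<bar> \<le> C"
  proof -
    have "\<bar>a 1\<bar> \<le> C * Q" using bnd n by auto
    then show ?thesis using Q unfolding \<xi>_def by (simp add: field_simps)
  qed
  have step: "\<bar>a (k+1) / a k - a k / a (k-1)\<bar> \<le> C^3 * t / Q" if k: "1 \<le> k" "k < n" for k
  proof -
    have ak: "a k \<noteq> 0" "a (k-1) \<noteq> 0" using nz k by auto
    have eq: "a (k+1) / a k - a k / a (k-1) = (a (k-1) * a (k+1) - a k ^ 2) / (a k * a (k-1))"
      using ak by (simp add: field_simps power2_eq_square)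
    have den: "(Q/C)^2 \<le> \<bar>a k * a (k-1)\<bar>"
    proof -
      have "Q/C \<le> \<bar>a k\<bar>" "Q/C \<le> \<bar>a (k-1)\<bar>" using bnd k by auto
      then have "(Q/C) * (Q/C) \<le> \<bar>a k\<bar> * \<bar>a (k-1)\<bar>" using QC by (intro mult_mono) auto
      then show ?thesis by (simp add: power2_eq_square abs_mult)
    qed
    have num: "\<bar>a (k-1) * a (k+1) - a k ^ 2\<bar> \<le> C * Q * t" using E k by auto
    have "\<bar>a (k+1) / a k - a k / a (k-1)\<bar> = \<bar>a (k-1) * a (k+1) - a k ^ 2\<bar> / \<bar>a k * a (k-1)\<bar>"
      unfolding eq abs_divide by (rule refl)
    also have "\<dots> \<le> (C * Q * t) / (Q/C)^2"
      using num den QC C Q t by (intro frac_le) auto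
    also have "\<dots> = C^3 * t / Q" using C Q by (simp add: field_simps power2_eq_square power3_eq_cube)
    finally show ?thesis .
  qed
  have R: "\<bar>a i / a (i-1) - \<xi>\<bar> \<le> real (i-1) * C^3 * t / Q" if "1 \<le> i" "i \<le> n" for i
    using that
  proof (induction i)
    case 0 then show ?case by simp
  next
    case (Suc k)
    show ?case
    proof (cases "k = 0")
      case True then show ?thesis using a0 by (simp add: \<xi>_def)
    next
      case False
      then have k: "1 \<le> k" "k < n" using Suc by auto
      have IH: "\<bar>a k / a (k-1) - \<xi>\<bar> \<le> real (k-1) * C^3 * t / Q" using Suc k by auto
      have "\<bar>a (Suc k) / a (Suc k - 1) - \<xi>\<bar> \<le> \<bar>a (k+1) / a k - a k / a (k-1)\<bar> + \<bar>a k / a (k-1) - \<xi>\<bar>"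
        by simp
      also have "\<dots> \<le> C^3 * t / Q + real (k-1) * C^3 * t / Q" using step[OF k] IH by linarith
      also have "\<dots> = real (Suc k - 1) * C^3 * t / Q" using k by (simp add: of_nat_diff add_divide_distrib[symmetric] algebra_simps)
      finally show ?thesis .
    qed
  qed
  have D: "\<bar>a i - Q * \<xi>^i\<bar> \<le> real i * real n * C^(4+i) * t" if "1 \<le> i" "i \<le> n" for i
    using that
  proof (induction i)
    case 0 then show ?case by simp
  next
    case (Suc k)
    show ?case
    proof (cases "k = 0")
      case True then show ?thesis using Q t C by (simp add: \<xi>_def)
    next
      case False
      then have k: "1 \<le> k" "k < n" using Suc by auto
      have IH: "\<bar>a k - Q * \<xi>^k\<bar> \<le> real k * real n * C^(4+k) * t" using Suc k by auto
      have Rk: "\<bar>a (k+1) / a k - \<xi>\<bar> \<le> real k * C^3 * t / Q" using R[of "k+1"] k by simp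
      have akb: "\<bar>a k\<bar> \<le> C * Q" using bnd k by auto
      have ak: "a k \<noteq> 0" using nz k by auto
      have eq: "a (Suc k) - Q * \<xi>^Suc k = (a (k+1) / a k - \<xi>) * a k + \<xi> * (a k - Q * \<xi>^k)"
        using ak by (simp add: field_simps)
      have "\<bar>a (Suc k) - Q * \<xi>^Suc k\<bar> \<le> \<bar>a (k+1) / a k - \<xi>\<bar> * \<bar>a k\<bar> + \<bar>\<xi>\<bar> * \<bar>a k - Q * \<xi>^k\<bar>"
        unfolding eq by (metis abs_mult abs_triangle_ineq)
      also have "\<dots> \<le> (real k * C^3 * t / Q) * (C * Q) + C * (real k * real n * C^(4+k) * t)"
        using Rk akb xi IH C t Q by (intro add_mono mult_mono) auto
      also have "\<dots> = real k * C^4 * t + real k * real n * C^(5+k) * t"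
        using Q by (simp add: field_simps power_add eval_nat_numeral)
      also have "\<dots> \<le> real n * C^(5+k) * t + real k * real n * C^(5+k) * t"
      proof -
        have "C^4 \<le> C^(5+k)" using C by (intro power_increasing) auto
        then have "real k * C^4 \<le> real n * C^(5+k)" using k C by (intro mult_mono) auto
        then show ?thesis using t C by (intro add_mono mult_right_mono) auto
      qed
      also have "\<dots> = real (Suc k) * real n * C^(4 + Suc k) * t" by (simp add: field_simps)
      finally show ?thesis .
    qed
  qed
  show ?thesis
  proof
    fix i assume i: "i \<in> {1..n}"
    have "\<bar>Q * \<xi>^i - a i\<bar> \<le> real i * real n * C^(4+i) * t" using D[of i] i by (simp add: abs_minus_commute)
    also have "\<dots> \<le> real n * real n * C^(n+4) * t"
    proof -
      have "C^(4+i) \<le> C^(n+4)" using C i by (intro power_increasing) auto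
      then have "real i * C^(4+i) \<le> real n * C^(n+4)" using i C by (intro mult_mono) auto
      then have "real i * C^(4+i) * (real n * t) \<le> real n * C^(n+4) * (real n * t)"
        using t by (intro mult_right_mono) auto
      then show ?thesis by (simp add: ac_simps)
    qed
    finally show "\<bar>Q * (a 1 / Q) ^ i - a i\<bar> \<le> real n ^ 2 * C ^ (n+4) * t"
      by (simp add: \<xi>_def power2_eq_square)
  qed
qed

lemma alg:
  fixes Q X Y Z u v w :: real
  assumes "X * Y = Z * Z"
  shows "(Q * X + u) * (Q * Y + v) - (Q * Z + w)^2 = Q * X * v + Q * Y * u + u * v - 2 * (Q * Z * w) - w * w"
  using assms by algebra

lemma part1:
  fixes a :: "nat \<Rightarrow> real" and Q C t \<xi> :: real and n :: nat
  assumes C: "C \<ge> 1" and Q: "Q \<ge> 1" and t: "t \<ge> 0" "t \<le> 1" and xi: "\<bar>\<xi>\<bar> \<le> C" and a0: "a 0 = Q"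
    and H: "\<forall>i\<in>{1..n}. \<bar>Q * \<xi> ^ i - a i\<bar> \<le> C * t"
  shows "(\<forall>i\<in>{0..<n}. \<bar>a i * \<xi> - a (i+1)\<bar> \<le> (C^2 + C) * t) \<and>
         (\<forall>i\<in>{1..<n}. \<bar>a (i-1) * a (i+1) - a i ^ 2\<bar> \<le> (4 * C^(n+1) + 2 * C^2) * (Q * t))"
proof -
  define e where "e j = a j - Q * \<xi>^j" for j
  have e: "\<bar>e j\<bar> \<le> C * t" if "j \<le> n" for j
  proof (cases "j = 0")
    case True then show ?thesis using a0 C t by (simp add: e_def)
  next
    case False then show ?thesis using H that by (force simp: e_def abs_minus_commute)
  qed
  have aeq: "a j = Q * \<xi>^j + e j" for j by (simp add: e_def)
  have xp: "\<bar>\<xi>\<bar>^j \<le> C^n" if "j \<le> n" for j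
  proof -
    have "\<bar>\<xi>\<bar>^j \<le> C^j" using xi by (intro power_mono) auto
    also have "\<dots> \<le> C^n" using C that by (intro power_increasing) auto
    finally show ?thesis .
  qed
  have A: "\<bar>a i * \<xi> - a (i+1)\<bar> \<le> (C^2 + C) * t" if "i < n" for i
  proof -
    have "a i * \<xi> - a (i+1) = e i * \<xi> - e (i+1)" unfolding aeq by (simp add: algebra_simps)
    then have "\<bar>a i * \<xi> - a (i+1)\<bar> \<le> \<bar>e i\<bar> * \<bar>\<xi>\<bar> + \<bar>e (i+1)\<bar>" by (simp add: abs_mult[symmetric] abs_triangle_ineq4)
    also have "\<dots> \<le> (C * t) * C + C * t" using e[of i] e[of "i+1"] that xi t C by (intro add_mono mult_mono) auto
    finally show ?thesis by (simp add: algebra_simps power2_eq_square)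
  qed
  have B: "\<bar>a (i-1) * a (i+1) - a i ^ 2\<bar> \<le> (4 * C^(n+1) + 2 * C^2) * (Q * t)" if i: "1 \<le> i" "i < n" for i
  proof -
    obtain j where ij: "i = Suc j" using i by (cases i) auto
    have x2: "\<xi>^(i-1) * \<xi>^(i+1) = \<xi>^i * \<xi>^i"
      unfolding ij power_add[symmetric] by simp
    have eq: "a (i-1) * a (i+1) - a i ^ 2 = Q * \<xi>^(i-1) * e (i+1) + Q * \<xi>^(i+1) * e (i-1) + e (i-1) * e (i+1)
         - 2 * (Q * \<xi>^i * e i) - e i * e i"
      unfolding aeq[of "i-1"] aeq[of "i+1"] aeq[of i] using x2 by (rule alg)
    have Qt: "0 \<le> Q * t" using Q t by simp
    have b1: "\<bar>Q * \<xi>^j * e k\<bar> \<le> C^(n+1) * (Q * t)" if "j \<le> n" "k \<le> n" for j k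
    proof -
      have "\<bar>Q * \<xi>^j * e k\<bar> = Q * (\<bar>\<xi>\<bar>^j * \<bar>e k\<bar>)" using Q by (simp add: abs_mult power_abs)
      also have "\<dots> \<le> Q * (C^n * (C * t))" using xp[OF that(1)] e[OF that(2)] Q C t
        by (intro mult_left_mono mult_mono) auto
      finally show ?thesis by (simp add: algebra_simps)
    qed
    have b2: "\<bar>e j * e k\<bar> \<le> C^2 * (Q * t)" if "j \<le> n" "k \<le> n" for j k
    proof -
      have "\<bar>e j * e k\<bar> \<le> (C * t) * (C * t)" unfolding abs_mult using e that C t by (intro mult_mono) auto
      also have "\<dots> = C^2 * (t * t)" by (simp add: power2_eq_square algebra_simps)
      also have "\<dots> \<le> C^2 * (Q * t)" using t Q by (intro mult_left_mono mult_right_mono) auto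
      finally show ?thesis .
    qed
    have tri: "\<And>a b c d e::real. \<bar>a+b+c-2*d-e\<bar> \<le> \<bar>a\<bar>+\<bar>b\<bar>+\<bar>c\<bar>+2*\<bar>d\<bar>+\<bar>e\<bar>" by arith
    have "\<bar>a (i-1) * a (i+1) - a i ^ 2\<bar> \<le> \<bar>Q * \<xi>^(i-1) * e (i+1)\<bar> + \<bar>Q * \<xi>^(i+1) * e (i-1)\<bar> + \<bar>e (i-1) * e (i+1)\<bar>
         + 2 * \<bar>Q * \<xi>^i * e i\<bar> + \<bar>e i * e i\<bar>"
      unfolding eq by (rule tri)
    also have "\<dots> \<le> C^(n+1) * (Q * t) + C^(n+1) * (Q * t) + C^2 * (Q * t) + 2 * (C^(n+1) * (Q * t)) + C^2 * (Q * t)"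
      using i by (intro add_mono b1 b2 mult_left_mono) auto
    also have "\<dots> = (4 * C^(n+1) + 2 * C^2) * (Q * t)" by (simp add: algebra_simps)
    finally show ?thesis .
  qed
  show ?thesis using A B by auto
qed

theorem proposition4p1:
  fixes n :: nat and C :: real
  assumes "n \<ge> 2" and "C \<ge> 1"
  shows "\<exists>C' > 0. \<forall>lam :: real. lam > 0 \<longrightarrow>
     ((\<forall>(\<xi>::real) (p::nat \<Rightarrow> int).
         1 / C \<le> \<bar>\<xi>\<bar> \<and> \<bar>\<xi>\<bar> \<le> C \<and> p 0 \<ge> 1 \<and>
         (\<forall>i\<in>{1..n}. \<bar>of_int (p 0) * \<xi> ^ i - of_int (p i)\<bar> \<le> C * of_int (p 0) powr (-lam))
       \<longrightarrow> (\<forall>i\<in>{0..<n}. \<bar>of_int (p i) * \<xi> - of_int (p (i+1))\<bar> \<le> C' * of_int (p 0) powr (-lam)) \<and>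
           (\<forall>i\<in>{1..<n}. \<bar>of_int (p (i-1) * p (i+1) - p i ^ 2)\<bar> \<le> C' * of_int (p 0) powr (1 - lam)))
     \<and>
      (\<forall>p::nat \<Rightarrow> int.
         p 0 \<ge> 1 \<and>
         (\<forall>i\<in>{0..n}. of_int (p 0) / C \<le> of_int \<bar>p i\<bar> \<and> of_int \<bar>p i\<bar> \<le> C * of_int (p 0)) \<and>
         (\<forall>i\<in>{1..<n}. \<bar>of_int (p (i-1) * p (i+1) - p i ^ 2)\<bar> \<le> C * of_int (p 0) powr (1 - lam))
       \<longrightarrow> (\<exists>\<xi>::real. \<forall>i\<in>{1..n}. \<bar>of_int (p 0) * \<xi> ^ i - of_int (p i)\<bar> \<le> C' * of_int (p 0) powr (-lam))))"
proof -
  have C: "C \<ge> 1" using assms by simp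
  define K where "K = real n ^ 2 * C^(n+4) + 4 * C^(n+1) + 3 * C^2 + C"
  have pos: "0 \<le> real n ^ 2 * C^(n+4)" "0 \<le> C^(n+1)" "0 \<le> C^2" using C by auto
  have K1: "C^2 + C \<le> K" and K2: "4 * C^(n+1) + 2 * C^2 \<le> K" and K3: "real n ^ 2 * C^(n+4) \<le> K"
    using pos C unfolding K_def by auto
  have Kpos: "K > 0" using pos C unfolding K_def by linarith
  show ?thesis
  proof (rule exI[of _ K], rule conjI[OF Kpos], rule allI, rule impI, rule conjI)
    fix lam :: real assume lam: "lam > 0"
    {
      fix p :: "nat \<Rightarrow> int"
      assume p0: "p 0 \<ge> 1"
      define Q where "Q = real_of_int (p 0)"
      define t where "t = Q powr (-lam)"
      have Q: "Q \<ge> 1" using p0 unfolding Q_def by simp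
      have t0: "t \<ge> 0" unfolding t_def by simp
      have t1: "t \<le> 1"
      proof -
        have "Q powr (-lam) \<le> Q powr 0" using Q lam by (intro powr_mono) auto
        then show ?thesis using Q unfolding t_def by simp
      qed
      have Qt: "Q powr (1 - lam) = Q * t" using Q unfolding t_def by (simp add: powr_diff powr_minus_divide)
      note Q t0 t1 Qt
    } note basics = this
    show "\<forall>(\<xi>::real) (p::nat \<Rightarrow> int).
         1 / C \<le> \<bar>\<xi>\<bar> \<and> \<bar>\<xi>\<bar> \<le> C \<and> p 0 \<ge> 1 \<and>
         (\<forall>i\<in>{1..n}. \<bar>of_int (p 0) * \<xi> ^ i - of_int (p i)\<bar> \<le> C * of_int (p 0) powr (-lam))
       \<longrightarrow> (\<forall>i\<in>{0..<n}. \<bar>of_int (p i) * \<xi> - of_int (p (i+1))\<bar> \<le> K * of_int (p 0) powr (-lam)) \<and>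
           (\<forall>i\<in>{1..<n}. \<bar>of_int (p (i-1) * p (i+1) - p i ^ 2)\<bar> \<le> K * of_int (p 0) powr (1 - lam))"
    proof (intro allI impI)
      fix \<xi> :: real and p :: "nat \<Rightarrow> int"
      assume h: "1 / C \<le> \<bar>\<xi>\<bar> \<and> \<bar>\<xi>\<bar> \<le> C \<and> p 0 \<ge> 1 \<and>
         (\<forall>i\<in>{1..n}. \<bar>of_int (p 0) * \<xi> ^ i - of_int (p i)\<bar> \<le> C * of_int (p 0) powr (-lam))"
      define Q where "Q = real_of_int (p 0)"
      define t where "t = Q powr (-lam)"
      have b: "Q \<ge> 1" "t \<ge> 0" "t \<le> 1" "Q powr (1 - lam) = Q * t"
        using basics[of p] h unfolding Q_def t_def by auto
      have P1: "(\<forall>i\<in>{0..<n}. \<bar>real_of_int (p i) * \<xi> - real_of_int (p (i+1))\<bar> \<le> (C^2 + C) * t) \<and>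
         (\<forall>i\<in>{1..<n}. \<bar>real_of_int (p (i-1)) * real_of_int (p (i+1)) - real_of_int (p i) ^ 2\<bar> \<le> (4 * C^(n+1) + 2 * C^2) * (Q * t))"
        using part1[of C Q t \<xi> "\<lambda>i. real_of_int (p i)" n] C b h unfolding Q_def t_def by auto
      show "(\<forall>i\<in>{0..<n}. \<bar>of_int (p i) * \<xi> - of_int (p (i+1))\<bar> \<le> K * of_int (p 0) powr (-lam)) \<and>
           (\<forall>i\<in>{1..<n}. \<bar>of_int (p (i-1) * p (i+1) - p i ^ 2)\<bar> \<le> K * of_int (p 0) powr (1 - lam))"
      proof (intro conjI ballI)
        fix i assume i: "i \<in> {0..<n}"
        have "\<bar>real_of_int (p i) * \<xi> - real_of_int (p (i+1))\<bar> \<le> (C^2 + C) * t" using P1 i by auto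
        also have "\<dots> \<le> K * t" using K1 b by (intro mult_right_mono) auto
        finally show "\<bar>of_int (p i) * \<xi> - of_int (p (i+1))\<bar> \<le> K * of_int (p 0) powr (-lam)"
          unfolding t_def Q_def .
      next
        fix i assume i: "i \<in> {1..<n}"
        have "\<bar>real_of_int (p (i-1)) * real_of_int (p (i+1)) - real_of_int (p i) ^ 2\<bar> \<le> (4 * C^(n+1) + 2 * C^2) * (Q * t)"
          using P1 i by auto
        also have "\<dots> \<le> K * (Q * t)" using K2 b by (intro mult_right_mono) auto
        finally show "\<bar>of_int (p (i-1) * p (i+1) - p i ^ 2)\<bar> \<le> K * of_int (p 0) powr (1 - lam)"
          using b(4) unfolding Q_def by simp
      qed
    qed
    show "\<forall>p::nat \<Rightarrow> int.
         p 0 \<ge> 1 \<and>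
         (\<forall>i\<in>{0..n}. of_int (p 0) / C \<le> of_int \<bar>p i\<bar> \<and> of_int \<bar>p i\<bar> \<le> C * of_int (p 0)) \<and>
         (\<forall>i\<in>{1..<n}. \<bar>of_int (p (i-1) * p (i+1) - p i ^ 2)\<bar> \<le> C * of_int (p 0) powr (1 - lam))
       \<longrightarrow> (\<exists>\<xi>::real. \<forall>i\<in>{1..n}. \<bar>of_int (p 0) * \<xi> ^ i - of_int (p i)\<bar> \<le> K * of_int (p 0) powr (-lam))"
    proof (intro allI impI)
      fix p :: "nat \<Rightarrow> int"
      assume h: "p 0 \<ge> 1 \<and>
         (\<forall>i\<in>{0..n}. of_int (p 0) / C \<le> of_int \<bar>p i\<bar> \<and> of_int \<bar>p i\<bar> \<le> C * of_int (p 0)) \<and>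
         (\<forall>i\<in>{1..<n}. \<bar>of_int (p (i-1) * p (i+1) - p i ^ 2)\<bar> \<le> C * of_int (p 0) powr (1 - lam))"
      define Q where "Q = real_of_int (p 0)"
      define t where "t = Q powr (-lam)"
      have b: "Q \<ge> 1" "t \<ge> 0" "t \<le> 1" "Q powr (1 - lam) = Q * t"
        using basics[of p] h unfolding Q_def t_def by auto
      have bnd: "\<forall>i\<le>n. Q / C \<le> \<bar>real_of_int (p i)\<bar> \<and> \<bar>real_of_int (p i)\<bar> \<le> C * Q"
        using h unfolding Q_def by auto
      have E: "\<forall>i\<in>{1..<n}. \<bar>real_of_int (p (i-1)) * real_of_int (p (i+1)) - real_of_int (p i) ^ 2\<bar> \<le> C * Q * t"
      proof
        fix i assume "i \<in> {1..<n}"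
        then have "\<bar>of_int (p (i-1) * p (i+1) - p i ^ 2)\<bar> \<le> C * Q powr (1 - lam)" using h unfolding Q_def by auto
        then show "\<bar>real_of_int (p (i-1)) * real_of_int (p (i+1)) - real_of_int (p i) ^ 2\<bar> \<le> C * Q * t"
          using b(4) by simp
      qed
      have P2: "\<forall>i\<in>{1..n}. \<bar>Q * (real_of_int (p 1) / Q) ^ i - real_of_int (p i)\<bar> \<le> real n ^ 2 * C ^ (n+4) * t"
        using part2[of C Q t n "\<lambda>i. real_of_int (p i)"] C b assms(1) bnd E unfolding Q_def by auto
      show "\<exists>\<xi>::real. \<forall>i\<in>{1..n}. \<bar>of_int (p 0) * \<xi> ^ i - of_int (p i)\<bar> \<le> K * of_int (p 0) powr (-lam)"
      proof (intro exI ballI)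
        fix i assume i: "i \<in> {1..n}"
        have "\<bar>Q * (real_of_int (p 1) / Q) ^ i - real_of_int (p i)\<bar> \<le> real n ^ 2 * C ^ (n+4) * t" using P2 i by auto
        also have "\<dots> \<le> K * t" using K3 b by (intro mult_right_mono) auto
        finally show "\<bar>of_int (p 0) * (real_of_int (p 1) / Q) ^ i - of_int (p i)\<bar> \<le> K * of_int (p 0) powr (-lam)"
          unfolding t_def Q_def .
      qed
    qed
  qed
qed

end
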